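(* For every $c>0$, $$\limsup_{k\to\infty}\ \limsup_{\epsilon\to0}\ \limsup_{N\to\infty}\ \sup_{|r|\le2\epsilon N+1}\ \sup_{f_N:\,D_N(f_N)\le c/N}\ \sum_{\eta\in\Omega}\Big\|\Big(\frac{1}{2k+1}\sum_{|z|\le k}\eta^z_1,\frac{1}{2k+1}\sum_{|z|\le k}\eta^z_2\Big)-\Big(\frac{1}{2k+1}\sum_{|z+r|\le k}\eta^z_1,\frac{1}{2k+1}\sum_{|z+r|\le k}\eta^z_2\Big)\Big\|_2 f_N(\eta)3^{-N}=0,$$ the inner supremum being over probability densities $f_N$ with respect to $\nu^{1/3}_N$, and $\|\cdot\|_2$ the Euclidean norm on $\mathbb{R}^2$.
   Context: $\mathbb{T}_N=\mathbb{Z}/N\mathbb{Z}$. Configurations $\eta=(\eta^x_\alpha)_{\alpha\in\{0,1,2\},x\in\mathbb{T}_N}$, $\eta^x_\alpha\in\{0,1\}$, $\sum_\alpha\eta^x_\alpha=1$; $\Omega$ the set of configurations ($|\Omega|=3^N$). $\eta^{x,x+1}_{\alpha,\beta}$ = configuration with contents of $x,x+1$ exchanged when $\eta^x_\alpha\eta^{x+1}_\beta=1$ (else $\eta$). $\nu^{1/3}_N$ is the uniform measure on $\Omega$; a probability density is $f_N:\Omega\to[0,\infty)$ with $\sum_\eta f_N(\eta)3^{-N}=1$. Dirichlet form: $D_N(f)=\frac12\sum_{\eta\in\Omega}3^{-N}\sum_{x\in\mathbb{T}_N}\sum_{\alpha,\beta=0}^2\eta^x_\alpha\eta^{x+1}_\beta\big(\sqrt{f(\eta^{x,x+1}_{\alpha,\beta})}-\sqrt{f(\eta)}\big)^2$.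 Site indices are taken modulo $N$. *)

theory Defs
  imports "HOL-Analysis.Analysis" "HOL-Library.Liminf_Limsup"
begin

text \<open>Configurations on the discrete torus T_N = {0..<N}: a configuration is a map
  from sites to species in {0,1,2}; eta^x_alpha = 1 iff the species at x is alpha.\<close>

definition Omega :: "nat \<Rightarrow> (nat \<Rightarrow> nat) set" where
  "Omega N = {0..<N} \<rightarrow>\<^sub>E {0..<3}"

definition occ :: "nat \<Rightarrow> (nat \<Rightarrow> nat) \<Rightarrow> nat \<Rightarrow> int \<Rightarrow> real" where
  "occ N \<eta> \<alpha> x = (if \<eta> (nat (x mod int N)) = \<alpha> then 1 else 0)"

definition exch :: "nat \<Rightarrow> (nat \<Rightarrow> nat) \<Rightarrow> nat \<Rightarrow> nat \<Rightarrow> nat \<Rightarrow> (nat \<Rightarrow> nat)" where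
  "exch N \<eta> x \<alpha> \<beta> =
     (if occ N \<eta> \<alpha> (int x) * occ N \<eta> \<beta> (int x + 1) = 1
      then \<eta>(x := \<eta> (Suc x mod N), Suc x mod N := \<eta> x) else \<eta>)"

definition is_density :: "nat \<Rightarrow> ((nat \<Rightarrow> nat) \<Rightarrow> real) \<Rightarrow> bool" where
  "is_density N f \<longleftrightarrow> (\<forall>\<eta>\<in>Omega N. 0 \<le> f \<eta>) \<and>
      (\<Sum>\<eta>\<in>Omega N. f \<eta> * (1/3) ^ N) = 1"

definition Dirichlet :: "nat \<Rightarrow> ((nat \<Rightarrow> nat) \<Rightarrow> real) \<Rightarrow> real" where
  "Dirichlet N f = (1/2) * (\<Sum>\<eta>\<in>Omega N. (1/3) ^ N * (\<Sum>x<N. \<Sum>\<alpha><3. \<Sum>\<beta><3.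
      occ N \<eta> \<alpha> (int x) * occ N \<eta> \<beta> (int x + 1) *
      (sqrt (f (exch N \<eta> x \<alpha> \<beta>)) - sqrt (f \<eta>)) ^ 2))"

definition box_diff :: "nat \<Rightarrow> nat \<Rightarrow> int \<Rightarrow> (nat \<Rightarrow> nat) \<Rightarrow> real" where
  "box_diff N k r \<eta> =
     (let a = (\<lambda>\<alpha>. (1 / (2 * real k + 1)) * (\<Sum>z\<in>{z::int. \<bar>z\<bar> \<le> int k}. occ N \<eta> \<alpha> z));
          b = (\<lambda>\<alpha>. (1 / (2 * real k + 1)) * (\<Sum>z\<in>{z::int. \<bar>z + r\<bar> \<le> int k}. occ N \<eta> \<alpha> z))
      in sqrt ((a 1 - b 1) ^ 2 + (a 2 - b 2) ^ 2))"

definition sup_quantity :: "real \<Rightarrow> nat \<Rightarrow> real \<Rightarrow> nat \<Rightarrow> ereal" where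
  "sup_quantity c k \<epsilon> N = Sup {ereal (\<Sum>\<eta>\<in>Omega N. box_diff N k r \<eta> * f \<eta> * (1/3) ^ N) | r f.
      real_of_int \<bar>r\<bar> \<le> 2 * \<epsilon> * real N + 1 \<and> is_density N f \<and> Dirichlet N f \<le> c / real N}"

end

theory Submission imports Defs "HOL-Real_Asymp.Real_Asymp" begin

definition swp :: "nat \<Rightarrow> nat \<Rightarrow> (nat\<Rightarrow>nat) \<Rightarrow> (nat\<Rightarrow>nat)" where
  "swp p q \<eta> = \<eta>(p := \<eta> q, q := \<eta> p)"

definition sw :: "nat \<Rightarrow> nat \<Rightarrow> (nat\<Rightarrow>nat) \<Rightarrow> (nat\<Rightarrow>nat)" where
  "sw N x = swp x (Suc x mod N)"

fun cmp :: "nat \<Rightarrow> nat list \<Rightarrow> (nat\<Rightarrow>nat) \<Rightarrow> (nat\<Rightarrow>nat)" where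
  "cmp N [] = id"
| "cmp N (t#ts) = cmp N ts \<circ> sw N t"

lemma cmp_append: "cmp N (xs @ ys) = cmp N ys \<circ> cmp N xs"
  by (induction xs) auto

lemma swp_Omega: "p < N \<Longrightarrow> q < N \<Longrightarrow> \<eta> \<in> Omega N \<Longrightarrow> swp p q \<eta> \<in> Omega N"
  by (auto simp: Omega_def PiE_iff extensional_def swp_def)

lemma swp_swp: "swp p q (swp p q \<eta>) = \<eta>"
  by (auto simp: swp_def fun_eq_iff)

lemma swp_comm: "swp p q = swp q p"
  by (auto simp: swp_def fun_eq_iff)

lemma swp_same: "swp p p \<eta> = \<eta>"
  by (auto simp: swp_def fun_eq_iff)

lemma swp_conj: "p \<noteq> q \<Longrightarrow> p \<noteq> q' \<Longrightarrow> q \<noteq> q' \<Longrightarrow> swp q q' (swp p q (swp q q' \<eta>)) = swp p q' \<eta>"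
  by (auto simp: swp_def fun_eq_iff)

lemma swp_bij: "p < N \<Longrightarrow> q < N \<Longrightarrow> bij_betw (swp p q) (Omega N) (Omega N)"
  by (rule bij_betwI[where g="swp p q"]) (auto simp: swp_Omega swp_swp)

lemma sum_swp: "p < N \<Longrightarrow> q < N \<Longrightarrow> (\<Sum>\<eta>\<in>Omega N. h (swp p q \<eta>)) = (\<Sum>\<eta>\<in>Omega N. h \<eta>)"
  using sum.reindex_bij_betw[OF swp_bij] by blast

lemma finite_Omega: "finite (Omega N)"
  by (simp add: Omega_def finite_PiE)

definition Bd :: "nat \<Rightarrow> ((nat\<Rightarrow>nat) \<Rightarrow> real) \<Rightarrow> nat \<Rightarrow> real" where
  "Bd N g x = (\<Sum>\<eta>\<in>Omega N. (g (sw N x \<eta>) - g \<eta>)^2)"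

lemma Bd_nonneg: "0 \<le> Bd N g x"
  by (simp add: Bd_def sum_nonneg)

lemma sq_weighted: "L > 0 \<Longrightarrow> ((a::real) + b)^2 \<le> (1 + 1/L) * a^2 + (1 + L) * b^2"
proof -
  assume L: "L > 0"
  have "0 \<le> (a / sqrt L - b * sqrt L)^2" by simp
  also have "\<dots> = a^2/L - 2*a*b + b^2 * L"
    using L by (simp add: power2_eq_square field_simps)
  finally show ?thesis by (simp add: power2_eq_square algebra_simps add_divide_distrib)
qed

lemma path_bound:
  assumes "\<forall>t\<in>set ts. t < N"
  shows "(\<Sum>\<eta>\<in>Omega N. (g (cmp N ts \<eta>) - g \<eta>)^2) \<le> real (length ts) * (\<Sum>t\<leftarrow>ts. Bd N g t)"
  using assms
proof (induction ts)
  case Nil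
  then show ?case by simp
next
  case (Cons t ts)
  have tN: "t < N" using Cons.prems by simp
  have IH: "(\<Sum>\<eta>\<in>Omega N. (g (cmp N ts \<eta>) - g \<eta>)^2) \<le> real (length ts) * (\<Sum>t\<leftarrow>ts. Bd N g t)"
    using Cons by simp
  have sN: "Suc t mod N < N" using tN by simp
  have re: "(\<Sum>\<eta>\<in>Omega N. (g (cmp N ts (sw N t \<eta>)) - g (sw N t \<eta>))^2) = (\<Sum>\<eta>\<in>Omega N. (g (cmp N ts \<eta>) - g \<eta>)^2)"
    unfolding sw_def using sum_swp[OF tN sN, of "\<lambda>\<eta>. (g (cmp N ts \<eta>) - g \<eta>)^2"] by simp
  show ?case
  proof (cases "ts = []")
    case True
    then show ?thesis by (simp add: Bd_def)
  next
    case False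
    define L where "L = real (length ts)"
    have L: "L > 0" using False by (simp add: L_def)
    have "(\<Sum>\<eta>\<in>Omega N. (g (cmp N (t#ts) \<eta>) - g \<eta>)^2)
       = (\<Sum>\<eta>\<in>Omega N. ((g (cmp N ts (sw N t \<eta>)) - g (sw N t \<eta>)) + (g (sw N t \<eta>) - g \<eta>))^2)"
      by simp
    also have "\<dots> \<le> (\<Sum>\<eta>\<in>Omega N. (1 + 1/L) * (g (cmp N ts (sw N t \<eta>)) - g (sw N t \<eta>))^2 + (1 + L) * (g (sw N t \<eta>) - g \<eta>)^2)"
      by (rule sum_mono) (rule sq_weighted[OF L])
    also have "\<dots> = (1 + 1/L) * (\<Sum>\<eta>\<in>Omega N. (g (cmp N ts \<eta>) - g \<eta>)^2) + (1 + L) * Bd N g t"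
      by (simp add: sum.distrib sum_distrib_left[symmetric] re Bd_def)
    also have "\<dots> \<le> (1 + 1/L) * (L * (\<Sum>t\<leftarrow>ts. Bd N g t)) + (1 + L) * Bd N g t"
      using IH L by (intro add_mono mult_left_mono) (auto simp: L_def)
    also have "\<dots> = (1 + L) * ((\<Sum>t\<leftarrow>ts. Bd N g t) + Bd N g t)"
      using L by (simp add: field_simps)
    finally show ?thesis by (simp add: L_def algebra_simps)
  qed
qed

fun P :: "nat \<Rightarrow> int \<Rightarrow> nat \<Rightarrow> nat list" where
  "P N u 0 = []"
| "P N u (Suc 0) = [nat (u mod int N)]"
| "P N u (Suc (Suc d)) = nat ((u + int (Suc d)) mod int N) # P N u (Suc d) @ [nat ((u + int (Suc d)) mod int N)]"

lemma nat_mod_neq: "0 < m \<Longrightarrow> m < N \<Longrightarrow> nat (a mod int N) \<noteq> nat ((a + int m) mod int N)"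
proof
  assume m: "0 < m" "m < N" and e: "nat (a mod int N) = nat ((a + int m) mod int N)"
  have "a mod int N = (a + int m) mod int N" using e m by (simp add: nat_eq_iff2)
  hence "int N dvd int m" by (metis add.commute mod_eq_dvd_iff add_diff_cancel_left' dvd_minus_iff minus_diff_eq)
  hence "N dvd m" by simp
  thus False using m by (simp add: nat_dvd_not_less)
qed

lemma Suc_nat_mod: "0 < N \<Longrightarrow> Suc (nat (a mod int N)) mod N = nat ((a + 1) mod int N)"
proof -
  assume N: "0 < N"
  have "int (Suc (nat (a mod int N)) mod N) = (a mod int N + 1) mod int N"
    using N by (simp add: zmod_int of_nat_mod add.commute)
  also have "\<dots> = (a + 1) mod int N" by (simp add: mod_add_left_eq)
  finally show ?thesis using N by simp
qed

lemma P_swp: "0 < d \<Longrightarrow> d < N \<Longrightarrow> cmp N (P N u d) = swp (nat (u mod int N)) (nat ((u + int d) mod int N))"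
proof (induction N u d rule: P.induct)
  case (1 N u)
  then show ?case by simp
next
  case (2 N u)
  then show ?case by (simp add: sw_def fun_eq_iff Suc_nat_mod)
next
  case (3 N u d)
  define t where "t = nat ((u + int (Suc d)) mod int N)"
  have N: "0 < N" using 3 by simp
  have IH: "cmp N (P N u (Suc d)) = swp (nat (u mod int N)) t"
    using 3 by (simp add: t_def)
  have swt: "sw N t = swp t (nat ((u + int (Suc (Suc d))) mod int N))"
    using Suc_nat_mod[OF N, of "u + int (Suc d)"] by (simp add: sw_def t_def add.assoc)
  have d1: "nat (u mod int N) \<noteq> t" unfolding t_def using 3 by (intro nat_mod_neq) auto
  have d2: "nat (u mod int N) \<noteq> nat ((u + int (Suc (Suc d))) mod int N)" using 3 by (intro nat_mod_neq) auto
  have d3: "t \<noteq> nat ((u + int (Suc (Suc d))) mod int N)" unfolding t_def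
    using nat_mod_neq[of 1 N "u + int (Suc d)"] 3 by (simp add: add.assoc)
  have "cmp N (P N u (Suc (Suc d))) = sw N t \<circ> cmp N (P N u (Suc d)) \<circ> sw N t"
    by (simp add: cmp_append t_def)
  also have "\<dots> = swp (nat (u mod int N)) (nat ((u + int (Suc (Suc d))) mod int N))"
    unfolding IH swt using swp_conj[OF d1 d2 d3] by (simp add: fun_eq_iff)
  finally show ?case .
qed

lemma length_P: "length (P N u d) = 2 * d - 1"
  by (induction N u d rule: P.induct) auto

lemma set_P: "0 < N \<Longrightarrow> \<forall>t\<in>set (P N u d). t < N"
  by (induction N u d rule: P.induct) (auto simp: nat_less_iff)

lemma sum_P: "(\<And>x. 0 \<le> (h x::real)) \<Longrightarrow> (\<Sum>t\<leftarrow>P N u d. h t) \<le> 2 * (\<Sum>i<d. h (nat ((u + int i) mod int N)))"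
proof (induction N u d rule: P.induct)
  case (1 N u) then show ?case by simp
next
  case (2 N u) then show ?case by simp
next
  case (3 N u d)
  then show ?case by (simp add: lessThan_Suc)
qed

lemma sum_window: assumes "d \<le> N" "\<And>x. 0 \<le> (h x::real)"
  shows "(\<Sum>i<d. h (nat ((u + int i) mod int N))) \<le> (\<Sum>x<N. h x)"
proof -
  have inj: "inj_on (\<lambda>i. nat ((u + int i) mod int N)) {..<d}"
  proof (rule inj_onI)
    fix i j assume i: "i \<in> {..<d}" and j: "j \<in> {..<d}" and e: "nat ((u + int i) mod int N) = nat ((u + int j) mod int N)"
    show "i = j"
    proof (rule ccontr)
      assume "i \<noteq> j"
      then consider "i < j" | "j < i" by linarith
      then show False
      proof cases
        case 1
        have "nat ((u + int i) mod int N) \<noteq> nat ((u + int i + int (j - i)) mod int N)"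
          using 1 i j assms(1) by (intro nat_mod_neq) auto
        thus False using e 1 by (simp add: of_nat_diff)
      next
        case 2
        have "nat ((u + int j) mod int N) \<noteq> nat ((u + int j + int (i - j)) mod int N)"
          using 2 i j assms(1) by (intro nat_mod_neq) auto
        thus False using e 2 by (simp add: of_nat_diff)
      qed
    qed
  qed
  have N: "0 < N \<or> d = 0" using assms(1) by auto
  have "(\<Sum>i<d. h (nat ((u + int i) mod int N))) = sum h ((\<lambda>i. nat ((u + int i) mod int N)) ` {..<d})"
    using sum.reindex[OF inj, of h] by simp
  also have "\<dots> \<le> (\<Sum>x<N. h x)"
  proof (cases "d = 0")
    case True thus ?thesis using assms(2) by (simp add: sum_nonneg)
  next
    case False
    hence "0 < N" using N by simp
    thus ?thesis by (intro sum_mono2) (auto simp: assms(2) nat_less_iff)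
  qed
  finally show ?thesis .
qed

lemma moving:
  assumes "d < N"
  shows "(\<Sum>\<eta>\<in>Omega N. (g (swp (nat (u mod int N)) (nat ((u + int d) mod int N)) \<eta>) - g \<eta>)^2)
     \<le> 4 * real d * (\<Sum>x<N. Bd N g x)"
proof (cases "d = 0")
  case True
  then show ?thesis by (simp add: swp_same)
next
  case False
  have N: "0 < N" using assms by simp
  have "(\<Sum>\<eta>\<in>Omega N. (g (swp (nat (u mod int N)) (nat ((u + int d) mod int N)) \<eta>) - g \<eta>)^2)
      = (\<Sum>\<eta>\<in>Omega N. (g (cmp N (P N u d) \<eta>) - g \<eta>)^2)"
    using P_swp[of d N u] False assms by simp
  also have "\<dots> \<le> real (length (P N u d)) * (\<Sum>t\<leftarrow>P N u d. Bd N g t)"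
    by (rule path_bound[OF set_P[OF N]])
  also have "\<dots> \<le> real (2 * d) * (2 * (\<Sum>x<N. Bd N g x))"
  proof (rule mult_mono)
    show "real (length (P N u d)) \<le> real (2 * d)" by (simp add: length_P)
    show "(\<Sum>t\<leftarrow>P N u d. Bd N g t) \<le> 2 * (\<Sum>x<N. Bd N g x)"
      using sum_P[of "Bd N g" N u d, OF Bd_nonneg] sum_window[of d N "Bd N g" u, OF _ Bd_nonneg] assms by linarith
  qed (auto intro!: sum_nonneg Bd_nonneg sum_list_nonneg)
  finally show ?thesis by simp
qed

lemma occ_x: "x < N \<Longrightarrow> occ N \<eta> \<alpha> (int x) = (if \<eta> x = \<alpha> then 1 else 0)"
  by (simp add: occ_def)

lemma occ_x1: "x < N \<Longrightarrow> occ N \<eta> \<beta> (int x + 1) = (if \<eta> (Suc x mod N) = \<beta> then 1 else 0)"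
proof -
  assume x: "x < N"
  have "nat ((int x + 1) mod int N) = Suc x mod N"
  proof -
    have "(int x + 1) mod int N = int (Suc x mod N)" by (simp add: zmod_int add.commute)
    thus ?thesis by simp
  qed
  thus ?thesis by (simp add: occ_def)
qed

lemma inner_eq:
  assumes "\<eta> \<in> Omega N" "x < N"
  shows "(\<Sum>\<alpha><3. \<Sum>\<beta><3. occ N \<eta> \<alpha> (int x) * occ N \<eta> \<beta> (int x + 1) *
      (sqrt (f (exch N \<eta> x \<alpha> \<beta>)) - sqrt (f \<eta>)) ^ 2) = (sqrt (f (sw N x \<eta>)) - sqrt (f \<eta>))^2"
proof -
  have a: "\<eta> x < 3" using assms by (auto simp: Omega_def PiE_iff)
  have b: "\<eta> (Suc x mod N) < 3" using assms by (auto simp: Omega_def PiE_iff)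
  have ex: "exch N \<eta> x (\<eta> x) (\<eta> (Suc x mod N)) = sw N x \<eta>"
    using assms(2) by (simp add: exch_def occ_x occ_x1 sw_def swp_def)
  have "(\<Sum>\<alpha><3. \<Sum>\<beta><3. occ N \<eta> \<alpha> (int x) * occ N \<eta> \<beta> (int x + 1) *
      (sqrt (f (exch N \<eta> x \<alpha> \<beta>)) - sqrt (f \<eta>)) ^ 2)
     = (\<Sum>\<alpha><3. \<Sum>\<beta><3. (if \<eta> x = \<alpha> \<and> \<eta> (Suc x mod N) = \<beta> then (sqrt (f (exch N \<eta> x \<alpha> \<beta>)) - sqrt (f \<eta>)) ^ 2 else 0))"
    using assms(2) by (intro sum.cong refl) (auto simp: occ_x occ_x1)
  also have "\<dots> = (\<Sum>\<alpha><3. (if \<eta> x = \<alpha> then (sqrt (f (exch N \<eta> x \<alpha> (\<eta> (Suc x mod N)))) - sqrt (f \<eta>)) ^ 2 else 0))"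
  proof (rule sum.cong[OF refl])
    fix \<alpha> :: nat assume "\<alpha> \<in> {..<3}"
    show "(\<Sum>\<beta><3. (if \<eta> x = \<alpha> \<and> \<eta> (Suc x mod N) = \<beta> then (sqrt (f (exch N \<eta> x \<alpha> \<beta>)) - sqrt (f \<eta>)) ^ 2 else 0))
       = (if \<eta> x = \<alpha> then (sqrt (f (exch N \<eta> x \<alpha> (\<eta> (Suc x mod N)))) - sqrt (f \<eta>)) ^ 2 else 0)"
    proof (cases "\<eta> x = \<alpha>")
      case True
      then show ?thesis using b sum.delta[of "{..<3}" "\<eta> (Suc x mod N)" "\<lambda>\<beta>. (sqrt (f (exch N \<eta> x \<alpha> \<beta>)) - sqrt (f \<eta>)) ^ 2"]
        by (simp add: eq_commute[of "\<eta> (Suc x mod N)"])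
    qed simp
  qed
  also have "\<dots> = (sqrt (f (exch N \<eta> x (\<eta> x) (\<eta> (Suc x mod N)))) - sqrt (f \<eta>)) ^ 2"
    using a sum.delta[of "{..<3}" "\<eta> x" "\<lambda>\<alpha>. (sqrt (f (exch N \<eta> x \<alpha> (\<eta> (Suc x mod N)))) - sqrt (f \<eta>)) ^ 2"]
    by (simp add: eq_commute[of "\<eta> x"])
  finally show ?thesis using ex by simp
qed

lemma Dirichlet_eq: "Dirichlet N f = (1/2) * (1/3)^N * (\<Sum>x<N. Bd N (\<lambda>\<eta>. sqrt (f \<eta>)) x)"
proof -
  have "\<And>\<eta>. \<eta> \<in> Omega N \<Longrightarrow> (\<Sum>x<N. \<Sum>\<alpha><3. \<Sum>\<beta><3.
      occ N \<eta> \<alpha> (int x) * occ N \<eta> \<beta> (int x + 1) *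
      (sqrt (f (exch N \<eta> x \<alpha> \<beta>)) - sqrt (f \<eta>)) ^ 2) = (\<Sum>x<N. (sqrt (f (sw N x \<eta>)) - sqrt (f \<eta>))^2)"
    by (rule sum.cong[OF refl]) (rule inner_eq, auto)
  hence "Dirichlet N f = (1/2) * (\<Sum>\<eta>\<in>Omega N. (1/3) ^ N * (\<Sum>x<N. (sqrt (f (sw N x \<eta>)) - sqrt (f \<eta>))^2))"
    unfolding Dirichlet_def by simp
  also have "\<dots> = (1/2) * ((1/3) ^ N * (\<Sum>\<eta>\<in>Omega N. \<Sum>x<N. (sqrt (f (sw N x \<eta>)) - sqrt (f \<eta>))^2))"
    by (simp add: sum_distrib_left)
  also have "(\<Sum>\<eta>\<in>Omega N. \<Sum>x<N. (sqrt (f (sw N x \<eta>)) - sqrt (f \<eta>))^2) = (\<Sum>x<N. Bd N (\<lambda>\<eta>. sqrt (f \<eta>)) x)"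
    unfolding Bd_def by (rule sum.swap)
  finally show ?thesis by simp
qed

lemma density_sum: "is_density N f \<Longrightarrow> (\<Sum>\<eta>\<in>Omega N. f \<eta>) = 3^N"
proof -
  assume d: "is_density N f"
  have "(\<Sum>\<eta>\<in>Omega N. f \<eta>) * (1/3)^N = 1"
    using d unfolding is_density_def by (simp add: sum_distrib_right)
  thus ?thesis by (simp add: field_simps)
qed

lemma l1_bound:
  assumes d: "is_density N f" and p: "p < N" and q: "q < N"
  shows "(1/3)^N * (\<Sum>\<eta>\<in>Omega N. \<bar>f (swp p q \<eta>) - f \<eta>\<bar>)
     \<le> 2 * sqrt ((1/3)^N * (\<Sum>\<eta>\<in>Omega N. (sqrt (f (swp p q \<eta>)) - sqrt (f \<eta>))^2))"
proof -
  let ?\<tau> = "swp p q"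
  define Q where "Q = (\<Sum>\<eta>\<in>Omega N. (sqrt (f (?\<tau> \<eta>)) - sqrt (f \<eta>))^2)"
  have f0: "\<And>\<eta>. \<eta> \<in> Omega N \<Longrightarrow> 0 \<le> f \<eta>" using d by (simp add: is_density_def)
  have f0t: "\<And>\<eta>. \<eta> \<in> Omega N \<Longrightarrow> 0 \<le> f (?\<tau> \<eta>)" using f0 swp_Omega[OF p q] by blast
  have pt: "\<And>\<eta>. \<eta> \<in> Omega N \<Longrightarrow> \<bar>f (?\<tau> \<eta>) - f \<eta>\<bar> = \<bar>sqrt (f (?\<tau> \<eta>)) - sqrt (f \<eta>)\<bar> * (sqrt (f (?\<tau> \<eta>)) + sqrt (f \<eta>))"
  proof -
    fix \<eta> assume e: "\<eta> \<in> Omega N"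
    have "f (?\<tau> \<eta>) - f \<eta> = (sqrt (f (?\<tau> \<eta>)) - sqrt (f \<eta>)) * (sqrt (f (?\<tau> \<eta>)) + sqrt (f \<eta>))"
      using f0[OF e] f0t[OF e] by (simp add: algebra_simps)
    thus "\<bar>f (?\<tau> \<eta>) - f \<eta>\<bar> = \<bar>sqrt (f (?\<tau> \<eta>)) - sqrt (f \<eta>)\<bar> * (sqrt (f (?\<tau> \<eta>)) + sqrt (f \<eta>))"
      using f0[OF e] f0t[OF e] by (simp add: abs_mult abs_of_nonneg)
  qed
  have b2: "\<And>\<eta>. \<eta> \<in> Omega N \<Longrightarrow> (sqrt (f (?\<tau> \<eta>)) + sqrt (f \<eta>))^2 \<le> 2 * (f (?\<tau> \<eta>) + f \<eta>)"
  proof -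
    fix \<eta> assume e: "\<eta> \<in> Omega N"
    have "0 \<le> (sqrt (f (?\<tau> \<eta>)) - sqrt (f \<eta>))^2" by simp
    thus "(sqrt (f (?\<tau> \<eta>)) + sqrt (f \<eta>))^2 \<le> 2 * (f (?\<tau> \<eta>) + f \<eta>)"
      using f0[OF e] f0t[OF e] by (simp add: power2_eq_square algebra_simps)
  qed
  have sumt: "(\<Sum>\<eta>\<in>Omega N. f (?\<tau> \<eta>)) = 3^N" using sum_swp[OF p q, of f] density_sum[OF d] by simp
  have "(\<Sum>\<eta>\<in>Omega N. \<bar>f (?\<tau> \<eta>) - f \<eta>\<bar>)^2
      = (\<Sum>\<eta>\<in>Omega N. \<bar>sqrt (f (?\<tau> \<eta>)) - sqrt (f \<eta>)\<bar> * (sqrt (f (?\<tau> \<eta>)) + sqrt (f \<eta>)))^2"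
    using pt by (simp cong: sum.cong)
  also have "\<dots> \<le> (\<Sum>\<eta>\<in>Omega N. \<bar>sqrt (f (?\<tau> \<eta>)) - sqrt (f \<eta>)\<bar>^2) * (\<Sum>\<eta>\<in>Omega N. (sqrt (f (?\<tau> \<eta>)) + sqrt (f \<eta>))^2)"
    by (rule Cauchy_Schwarz_ineq_sum)
  also have "\<dots> \<le> Q * (\<Sum>\<eta>\<in>Omega N. 2 * (f (?\<tau> \<eta>) + f \<eta>))"
    unfolding Q_def power2_abs by (intro mult_left_mono sum_mono b2) (auto intro: sum_nonneg)
  also have "\<dots> = Q * (4 * 3^N)"
    by (simp add: sum_distrib_left[symmetric] sum.distrib sumt density_sum[OF d])
  finally have A: "(\<Sum>\<eta>\<in>Omega N. \<bar>f (?\<tau> \<eta>) - f \<eta>\<bar>)^2 \<le> Q * (4 * 3^N)" .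
  have "((1/3)^N * (\<Sum>\<eta>\<in>Omega N. \<bar>f (?\<tau> \<eta>) - f \<eta>\<bar>))^2 = ((1/3)^N)^2 * (\<Sum>\<eta>\<in>Omega N. \<bar>f (?\<tau> \<eta>) - f \<eta>\<bar>)^2"
    by (simp add: power_mult_distrib)
  also have "\<dots> \<le> ((1/3)^N)^2 * (Q * (4 * 3^N))"
    by (rule mult_left_mono[OF A]) simp
  also have "\<dots> = 4 * ((1/3)^N * Q)"
    by (simp add: power2_eq_square power_one_over field_simps)
  finally have "(1/3)^N * (\<Sum>\<eta>\<in>Omega N. \<bar>f (?\<tau> \<eta>) - f \<eta>\<bar>) \<le> sqrt (4 * ((1/3)^N * Q))"
    by (rule real_le_rsqrt)
  also have "\<dots> = 2 * sqrt ((1/3)^N * Q)" by (simp add: real_sqrt_mult)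
  finally show ?thesis unfolding Q_def .
qed

lemma antisym_bound:
  assumes d: "is_density N f" and p: "p < N" and q: "q < N"
    and G1: "\<And>\<eta>. \<eta> \<in> Omega N \<Longrightarrow> \<bar>G \<eta>\<bar> \<le> 1"
    and Ga: "\<And>\<eta>. \<eta> \<in> Omega N \<Longrightarrow> G (swp p q \<eta>) = - G \<eta>"
  shows "(\<Sum>\<eta>\<in>Omega N. G \<eta> * f \<eta> * (1/3)^N) \<le> (1/2) * ((1/3)^N * (\<Sum>\<eta>\<in>Omega N. \<bar>f (swp p q \<eta>) - f \<eta>\<bar>))"
proof -
  let ?\<tau> = "swp p q"
  have "(\<Sum>\<eta>\<in>Omega N. G \<eta> * f \<eta>) = (\<Sum>\<eta>\<in>Omega N. G (?\<tau> \<eta>) * f (?\<tau> \<eta>))"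
    using sum_swp[OF p q, of "\<lambda>\<eta>. G \<eta> * f \<eta>"] by simp
  also have "\<dots> = (\<Sum>\<eta>\<in>Omega N. - G \<eta> * f (?\<tau> \<eta>))"
    using Ga by (intro sum.cong) auto
  finally have e: "(\<Sum>\<eta>\<in>Omega N. G \<eta> * f \<eta>) = (\<Sum>\<eta>\<in>Omega N. - G \<eta> * f (?\<tau> \<eta>))" .
  have "2 * (\<Sum>\<eta>\<in>Omega N. G \<eta> * f \<eta>) = (\<Sum>\<eta>\<in>Omega N. G \<eta> * (f \<eta> - f (?\<tau> \<eta>)))"
    by (subst mult_2, subst (2) e) (simp add: sum.distrib[symmetric] sum_negf[symmetric] algebra_simps)
  also have "\<dots> \<le> (\<Sum>\<eta>\<in>Omega N. \<bar>f (?\<tau> \<eta>) - f \<eta>\<bar>)"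
  proof (rule sum_mono)
    fix \<eta> assume e: "\<eta> \<in> Omega N"
    have "G \<eta> * (f \<eta> - f (?\<tau> \<eta>)) \<le> \<bar>G \<eta>\<bar> * \<bar>f (?\<tau> \<eta>) - f \<eta>\<bar>"
      by (metis abs_ge_self abs_minus_commute abs_mult)
    also have "\<dots> \<le> 1 * \<bar>f (?\<tau> \<eta>) - f \<eta>\<bar>" by (rule mult_right_mono[OF G1[OF e]]) simp
    finally show "G \<eta> * (f \<eta> - f (?\<tau> \<eta>)) \<le> \<bar>f (?\<tau> \<eta>) - f \<eta>\<bar>" by simp
  qed
  finally have "(\<Sum>\<eta>\<in>Omega N. G \<eta> * f \<eta>) \<le> (1/2) * (\<Sum>\<eta>\<in>Omega N. \<bar>f (?\<tau> \<eta>) - f \<eta>\<bar>)" by simp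
  hence "(\<Sum>\<eta>\<in>Omega N. G \<eta> * f \<eta>) * (1/3)^N \<le> (1/2) * (\<Sum>\<eta>\<in>Omega N. \<bar>f (?\<tau> \<eta>) - f \<eta>\<bar>) * (1/3)^N"
    by (rule mult_right_mono) simp
  moreover have "(\<Sum>\<eta>\<in>Omega N. G \<eta> * f \<eta> * (1/3)^N) = (\<Sum>\<eta>\<in>Omega N. G \<eta> * f \<eta>) * (1/3)^N"
    by (simp add: sum_distrib_right)
  ultimately show ?thesis by (simp add: mult_ac)
qed

definition X :: "nat \<Rightarrow> nat \<Rightarrow> int \<Rightarrow> int \<Rightarrow> (nat\<Rightarrow>nat) \<Rightarrow> real" where
  "X N \<alpha> r j \<eta> = occ N \<eta> \<alpha> j - occ N \<eta> \<alpha> (j - r)"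

lemma swp_at: "swp p q \<eta> s = (if s = p then \<eta> q else if s = q then \<eta> p else \<eta> s)"
  by (simp add: swp_def)

lemma X_abs: "\<bar>X N \<alpha> r j \<eta>\<bar> \<le> 1"
  by (simp add: X_def occ_def)

lemma nat_mod_eq: "0 < N \<Longrightarrow> (nat (a mod int N) = nat (b mod int N)) = (a mod int N = b mod int N)"
  by (simp add: eq_nat_nat_iff)

lemma mod_shift: "(a - r) mod (n::int) = b mod n \<Longrightarrow> a mod n = (b + r) mod n"
  by (metis mod_add_cong diff_add_cancel)

lemma Dirichlet_nonneg: "0 \<le> Dirichlet N f"
  unfolding Dirichlet_eq by (auto intro!: sum_nonneg Bd_nonneg mult_nonneg_nonneg)

lemma pair_bound:
  assumes d: "is_density N f" and N: "0 < N" and dN: "nat \<bar>r\<bar> < N"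
    and nb1: "i mod int N \<noteq> j mod int N" and nb2: "i mod int N \<noteq> (j - r) mod int N"
    and nb3: "i mod int N \<noteq> (j + r) mod int N"
  shows "(\<Sum>\<eta>\<in>Omega N. X N \<alpha> r i \<eta> * X N \<alpha> r j \<eta> * f \<eta> * (1/3)^N) \<le> sqrt (8 * real (nat \<bar>r\<bar>) * Dirichlet N f)"
proof -
  define p where "p = nat (j mod int N)"
  define q where "q = nat ((j - r) mod int N)"
  have p: "p < N" and q: "q < N" using N by (auto simp: p_def q_def nat_less_iff)
  have i1: "nat (i mod int N) \<noteq> p" "nat (i mod int N) \<noteq> q" using nb1 nb2 N by (auto simp: p_def q_def nat_mod_eq)
  have i2: "nat ((i - r) mod int N) \<noteq> p" using nb3 N mod_shift[of i r "int N" j] by (auto simp: p_def nat_mod_eq)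
  have i3: "nat ((i - r) mod int N) \<noteq> q" using nb1 N mod_shift[of i r "int N" "j - r"] by (auto simp: q_def nat_mod_eq)
  let ?G = "\<lambda>\<eta>. X N \<alpha> r i \<eta> * X N \<alpha> r j \<eta>"
  have G1: "\<bar>?G \<eta>\<bar> \<le> 1" for \<eta>
    using X_abs[of N \<alpha> r i \<eta>] X_abs[of N \<alpha> r j \<eta>] by (simp add: abs_mult mult_le_one)
  have Xi: "X N \<alpha> r i (swp p q \<eta>) = X N \<alpha> r i \<eta>" for \<eta>
    using i1 i2 i3 by (simp add: X_def occ_def swp_at)
  have Xj: "X N \<alpha> r j (swp p q \<eta>) = - X N \<alpha> r j \<eta>" for \<eta>
    by (simp add: X_def occ_def swp_at p_def[symmetric] q_def[symmetric])
  have Ga: "?G (swp p q \<eta>) = - ?G \<eta>" for \<eta> by (simp add: Xi Xj)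
  define Q where "Q = (\<Sum>\<eta>\<in>Omega N. (sqrt (f (swp p q \<eta>)) - sqrt (f \<eta>))^2)"
  define dd where "dd = nat \<bar>r\<bar>"
  have Qb: "Q \<le> 4 * real dd * (\<Sum>x<N. Bd N (\<lambda>\<eta>. sqrt (f \<eta>)) x)"
  proof (cases "0 \<le> r")
    case True
    have e: "swp p q = swp (nat ((j - r) mod int N)) (nat ((j - r + int dd) mod int N))"
      using True by (simp add: p_def q_def dd_def swp_comm)
    show ?thesis unfolding Q_def e using moving[of dd N "\<lambda>\<eta>. sqrt (f \<eta>)" "j - r"] dN dd_def by simp
  next
    case False
    have e: "swp p q = swp (nat (j mod int N)) (nat ((j + int dd) mod int N))"
      using False by (simp add: p_def q_def dd_def)
    show ?thesis unfolding Q_def e using moving[of dd N "\<lambda>\<eta>. sqrt (f \<eta>)" "j"] dN dd_def by simp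
  qed
  have sB: "(\<Sum>x<N. Bd N (\<lambda>\<eta>. sqrt (f \<eta>)) x) = 2 * 3^N * Dirichlet N f"
    unfolding Dirichlet_eq by (simp add: power_one_over)
  have "(\<Sum>\<eta>\<in>Omega N. ?G \<eta> * f \<eta> * (1/3)^N) \<le> (1/2) * ((1/3)^N * (\<Sum>\<eta>\<in>Omega N. \<bar>f (swp p q \<eta>) - f \<eta>\<bar>))"
    by (rule antisym_bound[where G="?G", OF d p q G1 Ga])
  also have "\<dots> \<le> (1/2) * (2 * sqrt ((1/3)^N * Q))"
    unfolding Q_def by (rule mult_left_mono[OF l1_bound[OF d p q]]) simp
  also have "\<dots> = sqrt ((1/3)^N * Q)" by simp
  also have "\<dots> \<le> sqrt ((1/3)^N * (4 * real dd * (2 * 3^N * Dirichlet N f)))"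
    using Qb sB by (intro real_sqrt_le_mono mult_left_mono) auto
  also have "\<dots> = sqrt (8 * real (nat \<bar>r\<bar>) * Dirichlet N f)"
    by (simp add: dd_def power_one_over)
  finally show ?thesis .
qed

definition J :: "nat \<Rightarrow> int set" where "J k = {z::int. \<bar>z\<bar> \<le> int k}"

lemma J_eq: "J k = {- int k..int k}" by (auto simp: J_def)

lemma finite_J: "finite (J k)" by (simp add: J_eq)

lemma card_J: "card (J k) = 2 * k + 1" by (simp add: J_eq)

lemma card_cls: assumes "2 * k + 1 \<le> N" shows "card {i \<in> J k. i mod int N = c} \<le> 1"
proof -
  have "\<forall>a1\<in>{i \<in> J k. i mod int N = c}. \<forall>a2\<in>{i \<in> J k. i mod int N = c}. a1 = a2"
  proof (intro ballI)
    fix a1 a2 assume a1: "a1 \<in> {i \<in> J k. i mod int N = c}" and a2: "a2 \<in> {i \<in> J k. i mod int N = c}"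
    have "int N dvd a1 - a2" using a1 a2 mod_eq_dvd_iff[of a1 "int N" a2] by auto
    moreover have "\<bar>a1 - a2\<bar> < int N" using a1 a2 assms by (auto simp: J_def)
    ultimately show "a1 = a2"
      by (metis abs_of_nat dvd_imp_le_int eq_iff_diff_eq_0 linorder_not_le)
  qed
  thus ?thesis using card_le_Suc0_iff_eq[of "{i \<in> J k. i mod int N = c}"] finite_J by simp
qed

definition bad :: "nat \<Rightarrow> int \<Rightarrow> int \<Rightarrow> int \<Rightarrow> bool" where
  "bad N r i j \<longleftrightarrow> i mod int N = j mod int N \<or> i mod int N = (j - r) mod int N \<or> i mod int N = (j + r) mod int N"

lemma count_bad: assumes "2 * k + 1 \<le> N" shows "(\<Sum>i\<in>J k. if bad N r i j then 1 else 0::real) \<le> 3"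
proof -
  have e: "{i \<in> J k. bad N r i j} = {i \<in> J k. i mod int N = j mod int N} \<union> {i \<in> J k. i mod int N = (j - r) mod int N} \<union> {i \<in> J k. i mod int N = (j + r) mod int N}"
    unfolding bad_def by blast
  have "card {i \<in> J k. bad N r i j} \<le> card {i \<in> J k. i mod int N = j mod int N} + card {i \<in> J k. i mod int N = (j - r) mod int N} + card {i \<in> J k. i mod int N = (j + r) mod int N}"
    unfolding e by (rule order_trans[OF card_Un_le add_right_mono[OF card_Un_le]])
  also have "\<dots> \<le> 1 + 1 + 1" using card_cls[OF assms] by (intro add_mono) auto
  finally have c: "card {i \<in> J k. bad N r i j} \<le> 3" by simp
  have "(\<Sum>i\<in>J k. if bad N r i j then 1 else 0::real) = real (card {i \<in> J k. bad N r i j})"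
    using finite_J[of k] sum.If_cases[of "J k" "bad N r j" "\<lambda>_. 1::real" "\<lambda>_. 0"]
    proof -
      have "J k \<inter> {i. bad N r i j} = {i \<in> J k. bad N r i j}" by blast
      thus ?thesis using sum.If_cases[of "J k" "\<lambda>i. bad N r i j" "\<lambda>_. 1::real" "\<lambda>_. 0"] finite_J[of k] by simp
    qed
  thus ?thesis using c by simp
qed

lemma density_nonneg: "is_density N f \<Longrightarrow> \<eta> \<in> Omega N \<Longrightarrow> 0 \<le> f \<eta>"
  by (simp add: is_density_def)

lemma pair_total:
  assumes d: "is_density N f" and N: "0 < N" and dN: "nat \<bar>r\<bar> < N"
  shows "(\<Sum>\<eta>\<in>Omega N. X N \<alpha> r i \<eta> * X N \<alpha> r j \<eta> * f \<eta> * (1/3)^N)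
     \<le> (if bad N r i j then 1 else 0) + sqrt (8 * real (nat \<bar>r\<bar>) * Dirichlet N f)"
proof (cases "bad N r i j")
  case True
  have "(\<Sum>\<eta>\<in>Omega N. X N \<alpha> r i \<eta> * X N \<alpha> r j \<eta> * f \<eta> * (1/3)^N) \<le> (\<Sum>\<eta>\<in>Omega N. f \<eta> * (1/3)^N)"
  proof (rule sum_mono)
    fix \<eta> assume e: "\<eta> \<in> Omega N"
    have "X N \<alpha> r i \<eta> * X N \<alpha> r j \<eta> \<le> 1"
    proof -
      have "\<bar>X N \<alpha> r i \<eta> * X N \<alpha> r j \<eta>\<bar> \<le> 1"
        using X_abs[of N \<alpha> r i \<eta>] X_abs[of N \<alpha> r j \<eta>] by (simp add: abs_mult mult_le_one)
      thus ?thesis by (rule abs_le_D1)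
    qed
    thus "X N \<alpha> r i \<eta> * X N \<alpha> r j \<eta> * f \<eta> * (1/3)^N \<le> f \<eta> * (1/3)^N"
      using mult_right_mono[of _ 1 "f \<eta>", OF _ density_nonneg[OF d e]] by (intro mult_right_mono) auto
  qed
  also have "\<dots> = 1" using d by (simp add: is_density_def)
  finally have "(\<Sum>\<eta>\<in>Omega N. X N \<alpha> r i \<eta> * X N \<alpha> r j \<eta> * f \<eta> * (1/3)^N) \<le> 1" .
  moreover have "0 \<le> sqrt (8 * real (nat \<bar>r\<bar>) * Dirichlet N f)" using Dirichlet_nonneg[of N f] by simp
  ultimately show ?thesis unfolding if_P[OF True] by linarith
next
  case False
  then show ?thesis using pair_bound[OF d N dN, of i j \<alpha>] by (simp add: bad_def)
qed

lemma second_moment: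
  assumes d: "is_density N f" and N: "0 < N" and dN: "nat \<bar>r\<bar> < N" and kN: "2 * k + 1 \<le> N"
  shows "(\<Sum>\<eta>\<in>Omega N. (\<Sum>j\<in>J k. X N \<alpha> r j \<eta>)^2 * f \<eta> * (1/3)^N)
     \<le> 3 * (2 * k + 1) + (2 * k + 1)^2 * sqrt (8 * real (nat \<bar>r\<bar>) * Dirichlet N f)"
proof -
  let ?s = "sqrt (8 * real (nat \<bar>r\<bar>) * Dirichlet N f)"
  have "(\<Sum>\<eta>\<in>Omega N. (\<Sum>j\<in>J k. X N \<alpha> r j \<eta>)^2 * f \<eta> * (1/3)^N)
      = (\<Sum>\<eta>\<in>Omega N. \<Sum>i\<in>J k. \<Sum>j\<in>J k. X N \<alpha> r i \<eta> * X N \<alpha> r j \<eta> * f \<eta> * (1/3)^N)"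
  proof (rule sum.cong[OF refl])
    fix \<eta>
    have "(\<Sum>j\<in>J k. X N \<alpha> r j \<eta>)^2 = (\<Sum>i\<in>J k. \<Sum>j\<in>J k. X N \<alpha> r i \<eta> * X N \<alpha> r j \<eta>)"
      by (simp add: power2_eq_square sum_product)
    thus "(\<Sum>j\<in>J k. X N \<alpha> r j \<eta>)^2 * f \<eta> * (1/3)^N = (\<Sum>i\<in>J k. \<Sum>j\<in>J k. X N \<alpha> r i \<eta> * X N \<alpha> r j \<eta> * f \<eta> * (1/3)^N)"
      by (simp add: sum_distrib_right)
  qed
  also have "\<dots> = (\<Sum>i\<in>J k. \<Sum>\<eta>\<in>Omega N. \<Sum>j\<in>J k. X N \<alpha> r i \<eta> * X N \<alpha> r j \<eta> * f \<eta> * (1/3)^N)"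
    by (rule sum.swap)
  also have "\<dots> = (\<Sum>i\<in>J k. \<Sum>j\<in>J k. \<Sum>\<eta>\<in>Omega N. X N \<alpha> r i \<eta> * X N \<alpha> r j \<eta> * f \<eta> * (1/3)^N)"
    by (rule sum.cong[OF refl], rule sum.swap)
  also have "\<dots> \<le> (\<Sum>i\<in>J k. \<Sum>j\<in>J k. (if bad N r i j then 1 else 0) + ?s)"
    by (intro sum_mono pair_total[OF d N dN])
  also have "\<dots> = (\<Sum>j\<in>J k. \<Sum>i\<in>J k. (if bad N r i j then 1 else 0)) + (2 * k + 1)^2 * ?s"
  proof -
    have "(\<Sum>i\<in>J k. \<Sum>j\<in>J k. (if bad N r i j then 1 else 0::real)) = (\<Sum>j\<in>J k. \<Sum>i\<in>J k. (if bad N r i j then 1 else 0))"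
      by (rule sum.swap)
    thus ?thesis by (simp add: sum.distrib card_J power2_eq_square algebra_simps)
  qed
  also have "\<dots> \<le> (\<Sum>j\<in>J k. 3) + (2 * k + 1)^2 * ?s"
    by (intro add_mono sum_mono count_bad[OF kN]) auto
  finally show ?thesis by (simp add: card_J add.commute)
qed

lemma box_shift: "(\<Sum>z\<in>{z::int. \<bar>z + r\<bar> \<le> int k}. occ N \<eta> \<alpha> z) = (\<Sum>j\<in>J k. occ N \<eta> \<alpha> (j - r))"
  by (rule sum.reindex_bij_witness[where i="\<lambda>j. j - r" and j="\<lambda>z. z + r"]) (auto simp: J_def)

lemma box_diff_sq:
  "(box_diff N k r \<eta>)^2 = (1 / (2 * real k + 1))^2 * ((\<Sum>j\<in>J k. X N 1 r j \<eta>)^2 + (\<Sum>j\<in>J k. X N 2 r j \<eta>)^2)"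
  "0 \<le> box_diff N k r \<eta>"
proof -
  have e: "(1 / (2 * real k + 1)) * (\<Sum>z\<in>{z::int. \<bar>z\<bar> \<le> int k}. occ N \<eta> \<alpha> z) - (1 / (2 * real k + 1)) * (\<Sum>z\<in>{z::int. \<bar>z + r\<bar> \<le> int k}. occ N \<eta> \<alpha> z)
     = (1 / (2 * real k + 1)) * (\<Sum>j\<in>J k. X N \<alpha> r j \<eta>)" for \<alpha>
    unfolding box_shift by (simp add: J_def[symmetric] X_def sum_subtractf right_diff_distrib)
  have "box_diff N k r \<eta> = sqrt (((1 / (2 * real k + 1)) * (\<Sum>j\<in>J k. X N 1 r j \<eta>))^2 + ((1 / (2 * real k + 1)) * (\<Sum>j\<in>J k. X N 2 r j \<eta>))^2)"
    unfolding box_diff_def Let_def e ..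
  thus "(box_diff N k r \<eta>)^2 = (1 / (2 * real k + 1))^2 * ((\<Sum>j\<in>J k. X N 1 r j \<eta>)^2 + (\<Sum>j\<in>J k. X N 2 r j \<eta>)^2)"
    by (simp add: power_mult_distrib distrib_left power_divide)
  show "0 \<le> box_diff N k r \<eta>" by (simp add: box_diff_def Let_def)
qed

lemma alg_K: "(K::real) > 0 \<Longrightarrow> (1 / K)^2 * ((3 * K + K^2 * s) + (3 * K + K^2 * s)) = 6 / K + 2 * s"
  by (simp add: power2_eq_square field_simps)

lemma expect_bound:
  assumes d: "is_density N f" and N: "0 < N" and dN: "nat \<bar>r\<bar> < N" and kN: "2 * k + 1 \<le> N"
  shows "(\<Sum>\<eta>\<in>Omega N. box_diff N k r \<eta> * f \<eta> * (1/3)^N)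
     \<le> sqrt (6 / (2 * real k + 1) + 2 * sqrt (8 * real (nat \<bar>r\<bar>) * Dirichlet N f))"
proof -
  let ?s = "sqrt (8 * real (nat \<bar>r\<bar>) * Dirichlet N f)"
  let ?K = "2 * real k + 1"
  define w where "w \<eta> = f \<eta> * (1/3)^N" for \<eta>
  have w0: "\<eta> \<in> Omega N \<Longrightarrow> 0 \<le> w \<eta>" for \<eta> using density_nonneg[OF d] by (simp add: w_def)
  have sw: "(\<Sum>\<eta>\<in>Omega N. w \<eta>) = 1" using d by (simp add: is_density_def w_def)
  have "(\<Sum>\<eta>\<in>Omega N. box_diff N k r \<eta> * w \<eta>)^2 = (\<Sum>\<eta>\<in>Omega N. (box_diff N k r \<eta> * sqrt (w \<eta>)) * sqrt (w \<eta>))^2"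
    using w0 by (simp add: mult.assoc cong: sum.cong)
  also have "\<dots> \<le> (\<Sum>\<eta>\<in>Omega N. (box_diff N k r \<eta> * sqrt (w \<eta>))^2) * (\<Sum>\<eta>\<in>Omega N. (sqrt (w \<eta>))^2)"
    by (rule Cauchy_Schwarz_ineq_sum)
  also have "\<dots> = (\<Sum>\<eta>\<in>Omega N. (box_diff N k r \<eta>)^2 * w \<eta>)"
    using w0 sw by (simp add: power_mult_distrib cong: sum.cong)
  also have "\<dots> = (1 / ?K)^2 * ((\<Sum>\<eta>\<in>Omega N. (\<Sum>j\<in>J k. X N 1 r j \<eta>)^2 * f \<eta> * (1/3)^N)
                                 + (\<Sum>\<eta>\<in>Omega N. (\<Sum>j\<in>J k. X N 2 r j \<eta>)^2 * f \<eta> * (1/3)^N))"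
    unfolding box_diff_sq(1) w_def by (simp add: sum_distrib_left sum.distrib[symmetric] algebra_simps)
  also have "\<dots> \<le> (1 / ?K)^2 * ((3 * ?K + ?K^2 * ?s) + (3 * ?K + ?K^2 * ?s))"
  proof -
    have m1: "(\<Sum>\<eta>\<in>Omega N. (\<Sum>j\<in>J k. X N 1 r j \<eta>)^2 * f \<eta> * (1/3)^N) \<le> 3 * ?K + ?K^2 * ?s"
      using second_moment[OF d N dN kN, of 1] by simp
    have m2: "(\<Sum>\<eta>\<in>Omega N. (\<Sum>j\<in>J k. X N 2 r j \<eta>)^2 * f \<eta> * (1/3)^N) \<le> 3 * ?K + ?K^2 * ?s"
      using second_moment[OF d N dN kN, of 2] by simp
    show ?thesis by (rule mult_left_mono[OF add_mono[OF m1 m2]]) simp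
  qed
  also have "\<dots> = 6 / ?K + 2 * ?s"
    by (rule alg_K) simp
  finally have "(\<Sum>\<eta>\<in>Omega N. box_diff N k r \<eta> * w \<eta>)^2 \<le> 6 / ?K + 2 * ?s" .
  hence "(\<Sum>\<eta>\<in>Omega N. box_diff N k r \<eta> * w \<eta>) \<le> sqrt (6 / ?K + 2 * ?s)" by (rule real_le_rsqrt)
  thus ?thesis by (simp add: w_def mult.assoc)
qed

lemma card_Omega: "card (Omega N) = 3^N"
  by (simp add: Omega_def card_PiE)

lemma const_density: "is_density N (\<lambda>_. 1)"
  by (simp add: is_density_def card_Omega power_one_over)

lemma const_Dirichlet: "Dirichlet N (\<lambda>_. 1) = 0"
  by (simp add: Dirichlet_def)

lemma sq_nonneg:
  assumes c: "0 < c" and e: "0 < \<epsilon>"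
  shows "0 \<le> sup_quantity c k \<epsilon> N"
proof -
  have mem: "ereal (\<Sum>\<eta>\<in>Omega N. box_diff N k 0 \<eta> * 1 * (1/3) ^ N) \<in> {ereal (\<Sum>\<eta>\<in>Omega N. box_diff N k r \<eta> * f \<eta> * (1/3) ^ N) | r f.
      real_of_int \<bar>r\<bar> \<le> 2 * \<epsilon> * real N + 1 \<and> is_density N f \<and> Dirichlet N f \<le> c / real N}"
    using c e const_density[of N] const_Dirichlet[of N]
    by (intro CollectI exI[of _ 0] exI[of _ "\<lambda>_. 1"]) auto
  have "0 \<le> ereal (\<Sum>\<eta>\<in>Omega N. box_diff N k 0 \<eta> * 1 * (1/3) ^ N)"
    by (simp add: sum_nonneg box_diff_sq(2))
  also have "\<dots> \<le> sup_quantity c k \<epsilon> N" unfolding sup_quantity_def by (rule Sup_upper[OF mem])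
  finally show ?thesis .
qed

lemma sq_upper:
  assumes c: "0 < c" and e: "0 < \<epsilon>" "\<epsilon> < 1/4" and N2: "2 \<le> N" and kN: "2 * k + 1 \<le> N" and Ne: "1 / real N \<le> \<epsilon>"
  shows "sup_quantity c k \<epsilon> N \<le> ereal (sqrt (6 / (2 * real k + 1) + 2 * sqrt (24 * c * \<epsilon>)))"
  unfolding sup_quantity_def
proof (rule Sup_least, clarify)
  fix r f assume r: "real_of_int \<bar>r\<bar> \<le> 2 * \<epsilon> * real N + 1" and d: "is_density N f" and D: "Dirichlet N f \<le> c / real N"
  have N: "0 < N" using N2 by simp
  have rN: "real_of_int \<bar>r\<bar> < real N"
  proof -
    have "2 * \<epsilon> * real N < real N / 2" using e N by (simp add: field_simps)
    thus ?thesis using r N2 by linarith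
  qed
  hence dN: "nat \<bar>r\<bar> < N" by linarith
  have D0: "0 \<le> Dirichlet N f" by (rule Dirichlet_nonneg)
  have "8 * real (nat \<bar>r\<bar>) * Dirichlet N f \<le> 8 * (2 * \<epsilon> * real N + 1) * (c / real N)"
    using r D D0 by (intro mult_mono) auto
  also have "\<dots> = 16 * c * \<epsilon> + 8 * c * (1 / real N)" using N by (simp add: field_simps)
  also have "\<dots> \<le> 16 * c * \<epsilon> + 8 * c * \<epsilon>" using Ne c by (intro add_left_mono mult_left_mono) auto
  finally have b: "8 * real (nat \<bar>r\<bar>) * Dirichlet N f \<le> 24 * c * \<epsilon>" by simp
  have "(\<Sum>\<eta>\<in>Omega N. box_diff N k r \<eta> * f \<eta> * (1/3)^N)
     \<le> sqrt (6 / (2 * real k + 1) + 2 * sqrt (8 * real (nat \<bar>r\<bar>) * Dirichlet N f))"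
    by (rule expect_bound[OF d N dN kN])
  also have "\<dots> \<le> sqrt (6 / (2 * real k + 1) + 2 * sqrt (24 * c * \<epsilon>))"
    using b by simp
  finally show "ereal (\<Sum>\<eta>\<in>Omega N. box_diff N k r \<eta> * f \<eta> * (1/3)^N) \<le> ereal (sqrt (6 / (2 * real k + 1) + 2 * sqrt (24 * c * \<epsilon>)))"
    by simp
qed

theorem lemmaA5:
  fixes c :: real
  assumes "c > 0"
  shows "limsup (\<lambda>k. Limsup (at_right 0) (\<lambda>\<epsilon>. limsup (\<lambda>N. sup_quantity c k \<epsilon> N))) = 0"
proof -
  define F where "F k \<epsilon> = limsup (\<lambda>N. sup_quantity c k \<epsilon> N)" for k \<epsilon>
  define \<phi> where "\<phi> k \<epsilon> = sqrt (6 / (2 * real k + 1) + 2 * sqrt (24 * c * \<epsilon>))" for k \<epsilon>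
  have Fup: "F k \<epsilon> \<le> ereal (\<phi> k \<epsilon>)" if e: "0 < \<epsilon>" "\<epsilon> < 1/4" for k \<epsilon>
    unfolding F_def
  proof (rule Limsup_bounded)
    show "\<forall>\<^sub>F N in sequentially. sup_quantity c k \<epsilon> N \<le> ereal (\<phi> k \<epsilon>)"
      unfolding eventually_sequentially
    proof (intro exI allI impI)
      fix N assume N: "max 2 (max (2 * k + 1) (nat \<lceil>1 / \<epsilon>\<rceil>)) \<le> N"
      have "1 / \<epsilon> \<le> real N" using N by linarith
      hence Ne: "1 / real N \<le> \<epsilon>" using e N by (simp add: field_simps)
      show "sup_quantity c k \<epsilon> N \<le> ereal (\<phi> k \<epsilon>)"
        unfolding \<phi>_def by (rule sq_upper[OF assms e _ _ Ne]) (use N in auto)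
    qed
  qed
  have Flow: "0 \<le> F k \<epsilon>" if e: "0 < \<epsilon>" for k \<epsilon>
    unfolding F_def by (rule le_Limsup) (auto intro!: always_eventually sq_nonneg[OF assms e])
  define G where "G k = Limsup (at_right 0) (F k)" for k
  have Gup: "G k \<le> ereal (sqrt (6 / (2 * real k + 1)))" for k
  proof -
    have ev: "\<forall>\<^sub>F \<epsilon> in at_right (0::real). 0 < \<epsilon> \<and> \<epsilon> < 1/4"
      using eventually_at_right_real[of 0 "1/4"] by (rule eventually_mono) auto
    have "G k \<le> Limsup (at_right 0) (\<lambda>\<epsilon>. ereal (\<phi> k \<epsilon>))"
      unfolding G_def by (rule Limsup_mono) (rule eventually_mono[OF ev], auto intro: Fup)
    also have "\<dots> = ereal (\<phi> k 0)"
    proof (rule lim_imp_Limsup)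
      show "\<not> trivial_limit (at_right (0::real))" by simp
      have "((\<lambda>\<epsilon>. \<phi> k \<epsilon>) \<longlongrightarrow> \<phi> k 0) (at_right 0)"
        unfolding \<phi>_def by (intro tendsto_intros tendsto_ident_at) 
      thus "((\<lambda>\<epsilon>. ereal (\<phi> k \<epsilon>)) \<longlongrightarrow> ereal (\<phi> k 0)) (at_right 0)" by (simp add: lim_ereal)
    qed
    finally show ?thesis by (simp add: \<phi>_def)
  qed
  have Glow: "0 \<le> G k" for k
  proof -
    have ev: "\<forall>\<^sub>F \<epsilon> in at_right (0::real). 0 < \<epsilon>"
      by (rule eventually_at_right_less)
    show ?thesis unfolding G_def by (rule le_Limsup) (auto intro: eventually_mono[OF ev] Flow)
  qed
  have "limsup G \<le> limsup (\<lambda>k. ereal (sqrt (6 / (2 * real k + 1))))"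
    by (rule Limsup_mono) (auto intro!: always_eventually Gup)
  also have "\<dots> = ereal 0"
  proof (rule lim_imp_Limsup)
    show "\<not> trivial_limit (sequentially :: nat filter)" by simp
    have "(\<lambda>k. sqrt (6 / (2 * real k + 1))) \<longlonglongrightarrow> 0" by real_asymp
    thus "(\<lambda>k. ereal (sqrt (6 / (2 * real k + 1)))) \<longlonglongrightarrow> ereal 0" by (simp add: lim_ereal)
  qed
  finally have up: "limsup G \<le> 0" by (simp add: zero_ereal_def)
  have low: "0 \<le> limsup G" by (rule le_Limsup) (auto intro!: always_eventually Glow)
  have "limsup G = 0" using up low by (rule antisym)
  moreover have "G = (\<lambda>k. Limsup (at_right 0) (\<lambda>\<epsilon>. limsup (\<lambda>N. sup_quantity c k \<epsilon> N)))"
    unfolding G_def[abs_def] F_def[abs_def] ..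
  ultimately show ?thesis by simp
qed

end
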